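(* Let $(X,d_X)$ be a discrete countable metric space, $Y=X\times\mathbb N$, and let $d_0$ be the metric on $X\times\overline{\mathbb N}$ given by $d_0(x_n,y_m)=d_X(x,y)+1$ for $n\ne m$ and $d_0(x_n,y_n)=d_X(x,y)$. Under the identification $T\leftrightarrow (T_n)_{n\in\mathbb N}$: (i) if $X$ is bounded, then $M_{X\times\mathbb N,d_0}=\ell_2(\mathbb B(H_X))'=\ell_2(C^*_u(X))'$; (ii) if $X$ is unbounded, then there exists $T\in M_{X\times\mathbb N,d_0}$ with $T\notin\ell_2(C^*_u(X))''$.
   Context: $\overline{\mathbb N}=\mathbb N\cup\{0\}$; $x_n=(x,n)$, $X_n=X\times\{n\}$, $X_0$ identified with $X$. $H_Z=\ell^2(Z)$. $C^*_u(X)$ is the norm closure in $\mathbb B(H_X)$ of bounded finite-propagation operators (propagation at most $L$: $(\delta_x,T\delta_y)=0$ whenever $d_X(x,y)\ge L$). For a metric $d$ on $X\sqcup Y$ extending $d_X$, $M_{Y,d}$ is the norm closure in $\mathbb B(H_X,H_Y)$ of bounded operators $T:H_X\to H_Y$ of finite propagation (there is $L$ with $(\delta_y,T\delta_x)=0$ whenever $d(x,y)\ge L$). $H_{X\times\mathbb N}=\bigoplus_{n\ge1}H_{X_n}$, $T_n=Q_nT$ where $Q_n$ projects onto $H_{X_n}$, and $T_n$ is regarded as an operator on $H_X$ via $\delta_{x_n}\leftrightarrow\delta_x$. For a $C^*$-algebra $A$: $\ell_2(A)$ is the Hilbert $A$-module of sequences $(a_n)$ with $\sum a_n^*a_n$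 norm convergent; its dual $\ell_2(A)'$ (bounded $A$-linear maps $\ell_2(A)\to A$) is identified with the module of sequences $(a_n)$ in $A$ whose partial sums $\sum_{n=1}^m a_n^*a_n$ are uniformly bounded in norm, acting by $(b_n)\mapsto\sum a_n^*b_n$; the bidual $\ell_2(A)''$ (bounded $A$-linear maps $\ell_2(A)'\to A$) is a Hilbert $A$-module with canonical embeddings $\ell_2(A)\subset\ell_2(A)''\subset\ell_2(A)'$, the second given by restricting a functional on $\ell_2(A)'$ to $\ell_2(A)$. Every element of $M_{X\times\mathbb N,d_0}$ is a sequence in $\ell_2(C^*_u(X))'$. *)

theory Defs
  imports "HOL-Analysis.Analysis"
begin

text \<open>Concrete model: an operator T : H_A -> H_B (H_Z = l^2(Z)) is represented by its
matrix (kernel) k :: 'b => 'a => complex, k y x = (delta_y, T delta_x).\<close>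

type_synonym ('b, 'a) kernel = "'b \<Rightarrow> 'a \<Rightarrow> complex"

definition fin_supp :: "('a \<Rightarrow> complex) \<Rightarrow> bool" where
  "fin_supp f \<longleftrightarrow> finite {x. f x \<noteq> 0}"

definition l2norm :: "('a \<Rightarrow> complex) \<Rightarrow> real" where
  "l2norm f = sqrt (infsum (\<lambda>x. (cmod (f x))^2) UNIV)"

definition kapply :: "('b, 'a) kernel \<Rightarrow> ('a \<Rightarrow> complex) \<Rightarrow> 'b \<Rightarrow> complex" where
  "kapply k f y = (\<Sum>x\<in>{x. f x \<noteq> 0}. k y x * f x)"

definition bounded_kernel :: "('b, 'a) kernel \<Rightarrow> bool" where
  "bounded_kernel k \<longleftrightarrow> (\<exists>C. \<forall>f. fin_supp f \<longrightarrow>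
      (\<lambda>y. (cmod (kapply k f y))^2) summable_on UNIV \<and> l2norm (kapply k f) \<le> C * l2norm f)"

definition knorm :: "('b, 'a) kernel \<Rightarrow> real" where
  "knorm k = (SUP f\<in>{f. fin_supp f \<and> l2norm f \<le> 1}. l2norm (kapply k f))"

definition kdiff :: "('b, 'a) kernel \<Rightarrow> ('b, 'a) kernel \<Rightarrow> ('b, 'a) kernel" where
  "kdiff k s = (\<lambda>y x. k y x - s y x)"

definition kadj :: "('b, 'a) kernel \<Rightarrow> ('a, 'b) kernel" where
  "kadj k = (\<lambda>x y. cnj (k y x))"

definition kmult :: "('c, 'b) kernel \<Rightarrow> ('b, 'a) kernel \<Rightarrow> ('c, 'a) kernel" where
  "kmult k s = (\<lambda>z x. infsum (\<lambda>y. k z y * s y x) UNIV)"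

definition bounded_ops :: "('a, 'a) kernel set" where
  "bounded_ops = {k. bounded_kernel k}"

definition finite_prop :: "('a::metric_space, 'a) kernel \<Rightarrow> bool" where
  "finite_prop s \<longleftrightarrow> (\<exists>L. \<forall>x y. dist x y \<ge> L \<longrightarrow> s x y = 0)"

definition uniform_roe :: "('a::metric_space, 'a) kernel set" where
  "uniform_roe = {k. bounded_kernel k \<and>
     (\<forall>e>0. \<exists>s. bounded_kernel s \<and> finite_prop s \<and> knorm (kdiff k s) < e)}"

text \<open>The metric d_0 on X x Nbar (level 0 is X itself).\<close>
definition d0 :: "'a::metric_space \<times> nat \<Rightarrow> 'a \<times> nat \<Rightarrow> real" where
  "d0 p q = (if snd p = snd q then dist (fst p) (fst q) else dist (fst p) (fst q) + 1)"

text \<open>Operators H_X -> H_{X x N}, N = {1,2,...}: the index (y,n) of the kernel stands for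
the point y_{n+1} of X_{n+1}.\<close>
definition finite_prop_M :: "('a::metric_space \<times> nat, 'a) kernel \<Rightarrow> bool" where
  "finite_prop_M s \<longleftrightarrow> (\<exists>L. \<forall>x y n. d0 (x, 0) (y, Suc n) \<ge> L \<longrightarrow> s (y, n) x = 0)"

definition M_XN :: "('a::metric_space \<times> nat, 'a) kernel set" where
  "M_XN = {k. bounded_kernel k \<and>
     (\<forall>e>0. \<exists>s. bounded_kernel s \<and> finite_prop_M s \<and> knorm (kdiff k s) < e)}"

text \<open>T |-> (T_n): component n of the result is T_{n+1}.\<close>
definition Tseq :: "('a \<times> nat, 'a) kernel \<Rightarrow> nat \<Rightarrow> ('a, 'a) kernel" where
  "Tseq k = (\<lambda>n y x. k (y, n) x)"

definition psum :: "(nat \<Rightarrow> ('a, 'a) kernel) \<Rightarrow> (nat \<Rightarrow> ('a, 'a) kernel) \<Rightarrow> nat \<Rightarrow> ('a, 'a) kernel" where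
  "psum a b m = (\<lambda>x y. \<Sum>n<m. kmult (kadj (a n)) (b n) x y)"

definition pair_conv :: "(nat \<Rightarrow> ('a, 'a) kernel) \<Rightarrow> (nat \<Rightarrow> ('a, 'a) kernel) \<Rightarrow> ('a, 'a) kernel \<Rightarrow> bool" where
  "pair_conv a b S \<longleftrightarrow> bounded_kernel S \<and> (\<lambda>m. knorm (kdiff (psum a b m) S)) \<longlonglongrightarrow> 0"

definition ell2_mod :: "('a, 'a) kernel set \<Rightarrow> (nat \<Rightarrow> ('a, 'a) kernel) set" where
  "ell2_mod A = {a. (\<forall>n. a n \<in> A) \<and> (\<exists>S. pair_conv a a S)}"

definition ell2_dual :: "('a, 'a) kernel set \<Rightarrow> (nat \<Rightarrow> ('a, 'a) kernel) set" where
  "ell2_dual A = {a. (\<forall>n. a n \<in> A) \<and> (\<exists>C. \<forall>m. knorm (psum a a m) \<le> C)}"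

definition dual_norm :: "(nat \<Rightarrow> ('a, 'a) kernel) \<Rightarrow> real" where
  "dual_norm b = sqrt (SUP m. knorm (psum b b m))"

text \<open>l_2(A)'' viewed inside l_2(A)': those a in l_2(A)' whose functional on l_2(A) is the
restriction of a bounded A-linear map phi : l_2(A)' -> A.\<close>
definition ell2_bidual :: "('a, 'a) kernel set \<Rightarrow> (nat \<Rightarrow> ('a, 'a) kernel) set" where
  "ell2_bidual A = {a \<in> ell2_dual A. \<exists>\<phi>.
     (\<forall>b\<in>ell2_dual A. \<phi> b \<in> A) \<and>
     (\<forall>b\<in>ell2_dual A. \<forall>c\<in>ell2_dual A. \<phi> (\<lambda>n x y. b n x y + c n x y) = (\<lambda>x y. \<phi> b x y + \<phi> c x y)) \<and>
     (\<forall>b\<in>ell2_dual A. \<forall>t\<in>A. \<phi> (\<lambda>n. kmult (b n) t) = kmult (\<phi> b) t) \<and>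
     (\<exists>C. \<forall>b\<in>ell2_dual A. knorm (\<phi> b) \<le> C * dual_norm b) \<and>
     (\<forall>b\<in>ell2_mod A. pair_conv a b (\<phi> b))}"

end

theory Submission
  imports Defs
begin


lemma infsum_fin:
  assumes "finite S" "\<And>x. x \<notin> S \<Longrightarrow> f x = 0"
  shows "infsum f UNIV = sum f S"
proof -
  have "infsum f UNIV = infsum f S" by (rule infsum_cong_neutral) (use assms in auto)
  then show ?thesis using assms(1) by simp
qed

lemma summable_fin:
  assumes "finite S" "\<And>x. x \<notin> S \<Longrightarrow> f x = 0"
  shows "f summable_on UNIV"
proof -
  have "(f summable_on UNIV) = (f summable_on S)" by (rule summable_on_cong_neutral) (use assms in auto)
  then show ?thesis using assms(1) by simp
qed

lemma l2norm_nonneg: "l2norm f \<ge> 0"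
  unfolding l2norm_def by (simp add: infsum_nonneg)

lemma l2norm_zero[simp]: "l2norm (\<lambda>_. 0) = 0"
  unfolding l2norm_def by simp

lemma fin_supp_zero[simp]: "fin_supp (\<lambda>_. 0)"
  unfolding fin_supp_def by simp

lemma kapply_zero_kernel[simp]: "kapply (\<lambda>_ _. 0) f = (\<lambda>_. 0)"
  unfolding kapply_def by (rule ext) simp

lemma knorm_least:
  assumes "\<And>f. fin_supp f \<Longrightarrow> l2norm f \<le> 1 \<Longrightarrow> l2norm (kapply k f) \<le> B"
  shows "knorm k \<le> B"
  unfolding knorm_def
proof (rule cSUP_least)
  have "(\<lambda>_. 0) \<in> {f. fin_supp f \<and> l2norm f \<le> 1}" by simp
  then show "{f. fin_supp f \<and> l2norm f \<le> 1} \<noteq> {}" by blast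
qed (use assms in auto)

lemma knorm_zero[simp]: "knorm (\<lambda>(_::'b) (_::'a). 0) = 0"
proof -
  have "knorm (\<lambda>(_::'b) (_::'a). 0) \<le> 0" by (rule knorm_least) simp
  moreover have "knorm (\<lambda>(_::'b) (_::'a). 0) \<ge> 0"
    unfolding knorm_def
    by (rule cSUP_upper2[where x="\<lambda>_. 0"]) (auto simp: bdd_above_def)
  ultimately show ?thesis by simp
qed

lemma kdiff_self[simp]: "kdiff k k = (\<lambda>_ _. 0)"
  unfolding kdiff_def by simp

lemma bounded_kernelD:
  fixes k :: "('b,'a) kernel"
  assumes "bounded_kernel k"
  obtains C where "C \<ge> 0" "\<And>f::'a\<Rightarrow>complex. fin_supp f \<Longrightarrow>
      (\<lambda>y. (cmod (kapply k f y))^2) summable_on UNIV \<and> l2norm (kapply k f) \<le> C * l2norm f"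
proof -
  obtain C where C: "\<And>f::'a\<Rightarrow>complex. fin_supp f \<Longrightarrow>
      (\<lambda>y. (cmod (kapply k f y))^2) summable_on UNIV \<and> l2norm (kapply k f) \<le> C * l2norm f"
    using assms unfolding bounded_kernel_def by blast
  show ?thesis
  proof (rule that[of "max C 0"])
    fix f :: "'a\<Rightarrow>complex" assume "fin_supp f"
    then show "(\<lambda>y. (cmod (kapply k f y))^2) summable_on UNIV \<and> l2norm (kapply k f) \<le> max C 0 * l2norm f"
      using C[of f] l2norm_nonneg[of f]
      by (meson max.cobounded1 mult_right_mono order_trans)
  qed simp
qed

lemma knorm_upper:
  assumes "bounded_kernel k" "fin_supp f" "l2norm f \<le> 1"
  shows "l2norm (kapply k f) \<le> knorm k"
proof -
  obtain C where C: "C \<ge> 0" "\<And>f. fin_supp f \<Longrightarrow>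
      (\<lambda>y. (cmod (kapply k f y))^2) summable_on UNIV \<and> l2norm (kapply k f) \<le> C * l2norm f"
    using bounded_kernelD[OF assms(1)] by blast
  have bdd: "bdd_above ((\<lambda>f. l2norm (kapply k f)) ` {f. fin_supp f \<and> l2norm f \<le> 1})"
    unfolding bdd_above_def
  proof (intro exI[of _ C] ballI)
    fix y assume "y \<in> (\<lambda>f. l2norm (kapply k f)) ` {f. fin_supp f \<and> l2norm f \<le> 1}"
    then obtain g where g: "fin_supp g" "l2norm g \<le> 1" "y = l2norm (kapply k g)" by auto
    have "y \<le> C * l2norm g" using C(2)[OF g(1)] g(3) by simp
    also have "\<dots> \<le> C" using g(2) C(1) by (simp add: mult_left_le)
    finally show "y \<le> C" .
  qed
  show ?thesis unfolding knorm_def by (rule cSUP_upper) (use assms bdd in auto)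
qed

definition delta :: "'a \<Rightarrow> 'a \<Rightarrow> complex" where
  "delta x = (\<lambda>x'. if x' = x then 1 else 0)"

lemma fin_supp_delta: "fin_supp (delta x)"
  unfolding fin_supp_def delta_def by simp

lemma kapply_delta: "kapply k (delta x) = (\<lambda>y. k y x)"
proof -
  have "{x'. delta x x' \<noteq> 0} = {x}" by (auto simp: delta_def)
  then show ?thesis unfolding kapply_def by (auto simp: delta_def)
qed

lemma l2norm_delta: "l2norm (delta x) = 1"
proof -
  have "infsum (\<lambda>y. (cmod (delta x y))^2) UNIV = sum (\<lambda>y. (cmod (delta x y))^2) {x}"
    by (rule infsum_fin) (auto simp: delta_def)
  then show ?thesis unfolding l2norm_def by (simp add: delta_def)
qed

lemma entry_le_knorm:
  assumes "bounded_kernel k"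
  shows "cmod (k y x) \<le> knorm k"
proof -
  obtain C where C: "C \<ge> 0" "\<And>f. fin_supp f \<Longrightarrow>
      (\<lambda>y. (cmod (kapply k f y))^2) summable_on UNIV \<and> l2norm (kapply k f) \<le> C * l2norm f"
    using bounded_kernelD[OF assms(1)] by blast
  have s: "(\<lambda>y. (cmod (k y x))^2) summable_on UNIV"
    using C(2)[OF fin_supp_delta[of x]] by (simp add: kapply_delta)
  have "infsum (\<lambda>y'. (cmod (k y' x))^2) {y} \<le> infsum (\<lambda>y'. (cmod (k y' x))^2) UNIV"
    by (rule infsum_mono_neutral) (use s in auto)
  then have "(cmod (k y x))^2 \<le> infsum (\<lambda>y'. (cmod (k y' x))^2) UNIV" by simp
  then have "cmod (k y x) \<le> l2norm (kapply k (delta x))"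
    unfolding l2norm_def kapply_delta using real_le_rsqrt by blast
  also have "\<dots> \<le> knorm k"
    by (rule knorm_upper[OF assms fin_supp_delta]) (simp add: l2norm_delta)
  finally show ?thesis .
qed

lemma kapply_kdiff: "kapply (kdiff k s) f y = kapply k f y - kapply s f y"
  unfolding kapply_def kdiff_def by (simp add: sum_subtractf left_diff_distrib)

lemma sq_sum_le: "((p::real) + q)^2 \<le> 2*p^2 + 2*q^2"
proof -
  have "0 \<le> (p - q)^2" by simp
  moreover have "(p - q)^2 = p^2 - 2*p*q + q^2" "(p + q)^2 = p^2 + 2*p*q + q^2"
    by (simp_all add: power2_eq_square algebra_simps)
  ultimately show ?thesis by linarith
qed

lemma sqrt_sum_bound: "a \<ge> 0 \<Longrightarrow> b \<ge> 0 \<Longrightarrow> sqrt (2*a + 2*b) \<le> 2 * sqrt a + 2 * sqrt b"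
proof -
  assume ab: "a \<ge> 0" "b \<ge> 0"
  have gen: "\<And>x y::real. (2*x+2*y)^2 = 4*x^2+4*y^2+8*(x*y)"
    by (simp add: power2_eq_square algebra_simps)
  have e0: "(2 * sqrt a + 2 * sqrt b)^2 = 4*(sqrt a)^2 + 4*(sqrt b)^2 + 8 * (sqrt a * sqrt b)"
    by (rule gen)
  have e: "(2 * sqrt a + 2 * sqrt b)^2 = 4*a + 4*b + 8 * (sqrt a * sqrt b)"
    unfolding e0 using ab by simp
  have "sqrt a * sqrt b \<ge> 0" using ab by simp
  then have "2*a + 2*b \<le> (2 * sqrt a + 2 * sqrt b)^2" unfolding e using ab by linarith
  then show ?thesis using ab by (simp add: real_le_lsqrt)
qed

lemma bounded_kdiff:
  fixes k s :: "('b,'a) kernel"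
  assumes "bounded_kernel k" "bounded_kernel s"
  shows "bounded_kernel (kdiff k s)"
proof -
  obtain C where C: "C \<ge> 0" "\<And>f::'a\<Rightarrow>complex. fin_supp f \<Longrightarrow>
      (\<lambda>y. (cmod (kapply k f y))^2) summable_on UNIV \<and> l2norm (kapply k f) \<le> C * l2norm f"
    using bounded_kernelD[OF assms(1)] by blast
  obtain D where D: "D \<ge> 0" "\<And>f::'a\<Rightarrow>complex. fin_supp f \<Longrightarrow>
      (\<lambda>y. (cmod (kapply s f y))^2) summable_on UNIV \<and> l2norm (kapply s f) \<le> D * l2norm f"
    using bounded_kernelD[OF assms(2)] by blast
  show ?thesis unfolding bounded_kernel_def
  proof (intro exI[of _ "2*C + 2*D"] allI impI conjI)
    fix f :: "'a\<Rightarrow>complex" assume f: "fin_supp f"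
    let ?u = "\<lambda>y. (cmod (kapply k f y))^2" and ?v = "\<lambda>y. (cmod (kapply s f y))^2"
    have su: "?u summable_on UNIV" and sv: "?v summable_on UNIV" using C(2)[OF f] D(2)[OF f] by auto
    have pt: "(cmod (kapply (kdiff k s) f y))^2 \<le> 2 * ?u y + 2 * ?v y" for y
    proof -
      have "cmod (kapply (kdiff k s) f y) \<le> cmod (kapply k f y) + cmod (kapply s f y)"
        unfolding kapply_kdiff by (rule norm_triangle_ineq4)
      then have "(cmod (kapply (kdiff k s) f y))^2 \<le> (cmod (kapply k f y) + cmod (kapply s f y))^2"
        by (simp add: power_mono)
      also have "\<dots> \<le> 2 * ?u y + 2 * ?v y"
        by (rule sq_sum_le)
      finally show ?thesis .
    qed
    have sw: "(\<lambda>y. 2 * ?u y + 2 * ?v y) summable_on UNIV"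
      by (intro summable_on_add summable_on_cmult_right su sv)
    show "(\<lambda>y. (cmod (kapply (kdiff k s) f y))^2) summable_on UNIV"
      by (rule summable_on_comparison_test[OF sw]) (use pt in auto)
    then have "infsum (\<lambda>y. (cmod (kapply (kdiff k s) f y))^2) UNIV \<le> infsum (\<lambda>y. 2 * ?u y + 2 * ?v y) UNIV"
      by (intro infsum_mono sw) (use pt in auto)
    also have "\<dots> = 2 * infsum ?u UNIV + 2 * infsum ?v UNIV"
      using su sv by (simp add: infsum_add summable_on_cmult_right infsum_cmult_right')
    finally have "l2norm (kapply (kdiff k s) f) \<le> sqrt (2 * infsum ?u UNIV + 2 * infsum ?v UNIV)"
      unfolding l2norm_def by simp
    also have "\<dots> \<le> 2 * l2norm (kapply k f) + 2 * l2norm (kapply s f)"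
      unfolding l2norm_def by (rule sqrt_sum_bound) (auto intro: infsum_nonneg)
    also have "\<dots> \<le> 2 * (C * l2norm f) + 2 * (D * l2norm f)"
      using C(2)[OF f] D(2)[OF f] by simp
    finally show "l2norm (kapply (kdiff k s) f) \<le> (2*C + 2*D) * l2norm f"
      by (simp add: algebra_simps)
  qed
qed

definition pkern :: "'a set \<Rightarrow> ('a \<Rightarrow> 'b) \<Rightarrow> ('b, 'a) kernel" where
  "pkern D g = (\<lambda>y x. if x \<in> D \<and> y = g x then 1 else 0)"

lemma pkern_apply_img:
  assumes "inj_on g D" "x0 \<in> D" "fin_supp f"
  shows "kapply (pkern D g) f (g x0) = f x0"
proof -
  let ?F = "{x. f x \<noteq> 0}"
  have "kapply (pkern D g) f (g x0) = (\<Sum>x\<in>?F. if x = x0 then f x else 0)"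
    unfolding kapply_def pkern_def
    by (rule sum.cong) (use assms(1,2) in \<open>auto simp: inj_on_def\<close>)
  also have "\<dots> = f x0" using assms(3) unfolding fin_supp_def by (simp add: sum.delta')
  finally show ?thesis .
qed

lemma pkern_apply_out:
  assumes "y \<notin> g ` D"
  shows "kapply (pkern D g) f y = 0"
  unfolding kapply_def pkern_def using assms by (auto intro!: sum.neutral)

lemma pkern_bound:
  assumes "inj_on g D" "fin_supp f"
  shows "(\<lambda>y. (cmod (kapply (pkern D g) f y))^2) summable_on UNIV \<and> l2norm (kapply (pkern D g) f) \<le> l2norm f"
proof -
  let ?F = "{x. f x \<noteq> 0}"
  have fF: "finite ?F" using assms(2) unfolding fin_supp_def .
  let ?G = "g ` (D \<inter> ?F)"
  have z: "(cmod (kapply (pkern D g) f y))^2 = 0" if "y \<notin> ?G" for y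
  proof (cases "y \<in> g ` D")
    case True
    then obtain x where x: "x \<in> D" "y = g x" by auto
    then have "f x = 0" using that by auto
    then show ?thesis using pkern_apply_img[OF assms(1) x(1) assms(2)] x by simp
  qed (simp add: pkern_apply_out)
  have fin: "finite ?G" using fF by simp
  show ?thesis
  proof
    show "(\<lambda>y. (cmod (kapply (pkern D g) f y))^2) summable_on UNIV"
      by (rule summable_fin[OF fin]) (use z in auto)
    have "infsum (\<lambda>y. (cmod (kapply (pkern D g) f y))^2) UNIV = (\<Sum>y\<in>?G. (cmod (kapply (pkern D g) f y))^2)"
      by (rule infsum_fin[OF fin]) (use z in auto)
    also have "\<dots> = (\<Sum>x\<in>D \<inter> ?F. (cmod (kapply (pkern D g) f (g x)))^2)"
      by (rule sum.reindex[unfolded comp_def]) (use assms(1) in \<open>auto intro: inj_on_subset\<close>)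
    also have "\<dots> = (\<Sum>x\<in>D \<inter> ?F. (cmod (f x))^2)"
      by (rule sum.cong) (use pkern_apply_img[OF assms(1) _ assms(2)] in auto)
    also have "\<dots> \<le> (\<Sum>x\<in>?F. (cmod (f x))^2)"
      by (rule sum_mono2) (use fF in auto)
    also have "\<dots> = infsum (\<lambda>x. (cmod (f x))^2) UNIV"
      by (rule infsum_fin[symmetric, OF fF]) auto
    finally show "l2norm (kapply (pkern D g) f) \<le> l2norm f"
      unfolding l2norm_def by simp
  qed
qed

lemma pkern_bounded: "inj_on g D \<Longrightarrow> bounded_kernel (pkern D g)"
  unfolding bounded_kernel_def by (rule exI[of _ 1]) (simp add: pkern_bound)

lemma pkern_knorm: "inj_on g D \<Longrightarrow> knorm (pkern D g) \<le> 1"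
  by (rule knorm_least) (meson pkern_bound order_trans)

definition sk :: "'b \<Rightarrow> 'a \<Rightarrow> ('b, 'a) kernel" where
  "sk u v = (\<lambda>y x. if y = u \<and> x = v then 1 else 0)"

lemma sk_pkern: "sk u v = pkern {v} (\<lambda>_. u)"
  unfolding sk_def pkern_def by (auto intro!: ext)

lemma sk_bounded: "bounded_kernel (sk u v)"
  unfolding sk_pkern by (rule pkern_bounded) simp

lemma sk_knorm: "knorm (sk u v) \<le> 1"
  unfolding sk_pkern by (rule pkern_knorm) simp

lemma zero_bounded: "bounded_kernel (\<lambda>_ _. 0)"
  unfolding bounded_kernel_def by (rule exI[of _ 0]) simp

lemma roeI: "bounded_kernel k \<Longrightarrow> finite_prop k \<Longrightarrow> k \<in> uniform_roe"
  unfolding uniform_roe_def by auto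

lemma sk_roe: "sk u v \<in> uniform_roe"
  by (rule roeI[OF sk_bounded]) (auto simp: finite_prop_def sk_def intro!: exI[of _ "dist u v + 1"])

lemma zero_roe: "(\<lambda>_ _. 0) \<in> uniform_roe"
  by (rule roeI[OF zero_bounded]) (auto simp: finite_prop_def)

lemma kmult_sk_right: "kmult k (sk u v) = (\<lambda>z x. if x = v then k z u else 0)"
proof (intro ext)
  fix z x
  have "infsum (\<lambda>y. k z y * sk u v y x) UNIV = (\<Sum>y\<in>{u}. k z y * sk u v y x)"
    by (rule infsum_fin) (auto simp: sk_def)
  then show "kmult k (sk u v) z x = (if x = v then k z u else 0)"
    unfolding kmult_def by (simp add: sk_def)
qed

lemma kadj_sk: "kadj (sk u v) = sk v u"
  unfolding kadj_def sk_def by (auto intro!: ext)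

lemma kmult_sk_sk: "kmult (sk a b) (sk u v) = (if b = u then sk a v else (\<lambda>_ _. 0))"
  unfolding kmult_sk_right by (auto simp: sk_def intro!: ext)

lemma kmult_zero_right[simp]: "kmult k (\<lambda>_ _. 0) = (\<lambda>_ _. 0)"
  unfolding kmult_def by simp

lemma kadj_zero[simp]: "kadj (\<lambda>_ _. 0) = (\<lambda>_ _. 0)"
  unfolding kadj_def by simp



primrec grow :: "'a::metric_space \<Rightarrow> nat \<Rightarrow> 'a" where
  "grow a 0 = a"
| "grow a (Suc n) = (SOME y. dist a y > dist a (grow a n) + real (Suc n))"

lemma grow_step:
  fixes a :: "'a::metric_space"
  assumes "\<not> bounded (UNIV::'a set)"
  shows "dist a (grow a (Suc n)) > dist a (grow a n) + real (Suc n)"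
proof -
  have "\<exists>y. dist a y > dist a (grow a n) + real (Suc n)"
  proof (rule ccontr)
    assume "\<not> ?thesis"
    then have "\<forall>y\<in>UNIV. dist a y \<le> dist a (grow a n) + real (Suc n)" by (auto simp: not_less)
    then have "bounded (UNIV::'a set)" unfolding bounded_def by (intro exI) assumption
    then show False using assms by simp
  qed
  from someI_ex[OF this] show ?thesis by simp
qed

lemma grow_props:
  assumes "\<not> bounded (UNIV::'a::metric_space set)"
  shows "inj (grow (a::'a))" "\<And>n. dist (grow a (2*n)) (grow a (2*n+1)) \<ge> real n"
proof -
  have sm: "strict_mono (\<lambda>n. dist a (grow a n))"
    by (rule strict_monoI_Suc) (use grow_step[OF assms] in \<open>smt (verit) of_nat_0_le_iff\<close>)
  show "inj (grow a)"
  proof (rule injI)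
    fix m n assume "grow a m = grow a n"
    then have "dist a (grow a m) = dist a (grow a n)" by simp
    then show "m = n" using strict_mono_eq[OF sm] by blast
  qed
  fix n
  have "dist a (grow a (Suc (2*n))) > dist a (grow a (2*n)) + real (Suc (2*n))"
    by (rule grow_step[OF assms])
  moreover have "dist a (grow a (Suc (2*n))) \<le> dist a (grow a (2*n)) + dist (grow a (2*n)) (grow a (2*n+1))"
    by (simp add: dist_triangle)
  ultimately show "dist (grow a (2*n)) (grow a (2*n+1)) \<ge> real n" by simp
qed

lemma tendsto_const_eventually_zero:
  assumes "(f \<longlongrightarrow> 0) sequentially" "eventually (\<lambda>m. f m = (c::real)) sequentially"
  shows "c = 0"
proof -
  have "(f \<longlongrightarrow> c) sequentially" using assms(2) by (rule tendsto_eventually)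
  then show ?thesis using assms(1) LIMSEQ_unique by blast
qed

lemma part2:
  assumes unb: "\<not> bounded (UNIV::'a::metric_space set)"
  shows "\<exists>k \<in> (M_XN :: ('a \<times> nat, 'a) kernel set). Tseq k \<notin> ell2_bidual (uniform_roe :: ('a,'a) kernel set)"
proof -
  obtain a0 :: 'a where True by blast
  define p where "p = grow a0"
  have injp: "inj p" and dp: "\<And>n. dist (p (2*n)) (p (2*n+1)) \<ge> real n"
    using grow_props[OF unb, where a=a0] unfolding p_def by auto
  define xs where "xs n = p (2*n)" for n
  define zs where "zs n = p (2*n+1)" for n
  have injx: "inj xs" unfolding xs_def by (rule injI) (use injp in \<open>simp add: inj_eq\<close>)
  have injz: "inj zs" unfolding zs_def by (rule injI) (use injp in \<open>simp add: inj_eq\<close>)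
  have dxz: "\<And>n. dist (xs n) (zs n) \<ge> real n" unfolding xs_def zs_def by (rule dp)
  define T :: "('a \<times> nat, 'a) kernel" where "T = pkern (range xs) (\<lambda>x. (x, inv xs x))"
  have Tinj: "inj_on (\<lambda>x. (x, inv xs x)) (range xs)" by (auto simp: inj_on_def)
  have Tval: "T (y, n) x = (if y = xs n \<and> x = xs n then 1 else 0)" for y n x
    unfolding T_def pkern_def using injx by (auto simp: inv_f_f)
  have TM: "T \<in> M_XN"
    unfolding M_XN_def
  proof (intro CollectI conjI allI impI)
    show bT: "bounded_kernel T" unfolding T_def by (rule pkern_bounded[OF Tinj])
    fix e :: real assume "e > 0"
    have "finite_prop_M T" unfolding finite_prop_M_def
      by (rule exI[of _ 2]) (auto simp: Tval d0_def)
    then show "\<exists>s. bounded_kernel s \<and> finite_prop_M s \<and> knorm (kdiff T s) < e"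
      using bT \<open>e > 0\<close> by (intro exI[of _ T]) simp
  qed
  have aval: "Tseq T n = sk (xs n) (xs n)" for n
    unfolding Tseq_def sk_def by (auto simp: Tval intro!: ext)
  have "Tseq T \<notin> ell2_bidual uniform_roe"
  proof
    assume "Tseq T \<in> ell2_bidual uniform_roe"
    then obtain \<phi> where
      ph1: "\<And>b. b\<in>ell2_dual uniform_roe \<Longrightarrow> \<phi> b \<in> uniform_roe" and
      ph3: "\<And>b t. b\<in>ell2_dual uniform_roe \<Longrightarrow> t\<in>uniform_roe \<Longrightarrow> \<phi> (\<lambda>n. kmult (b n) t) = kmult (\<phi> b) t" and
      ph5: "\<And>b. b\<in>ell2_mod uniform_roe \<Longrightarrow> pair_conv (Tseq T) b (\<phi> b)"
      unfolding ell2_bidual_def by blast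
    define b where "b n = sk (xs n) (zs n)" for n
    have psb: "psum b b m = pkern (zs ` {..<m}) id" for m
    proof (intro ext)
      fix x y
      have "psum b b m x y = (\<Sum>n<m. sk (zs n) (zs n) x y)"
        unfolding psum_def b_def kadj_sk kmult_sk_sk by simp
      also have "\<dots> = pkern (zs ` {..<m}) id x y"
      proof (cases "x = y \<and> x \<in> zs ` {..<m}")
        case True
        then obtain j where j: "j < m" "x = zs j" "y = zs j" by auto
        have "(\<Sum>n<m. sk (zs n) (zs n) x y) = (\<Sum>n<m. if n = j then 1 else 0)"
          by (rule sum.cong) (use injz j in \<open>auto simp: sk_def inj_def\<close>)
        also have "\<dots> = 1" using j by simp
        finally show ?thesis using True by (auto simp: pkern_def)
      next
        case False
        then have "(\<Sum>n<m. sk (zs n) (zs n) x y) = 0"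
          by (intro sum.neutral) (auto simp: sk_def)
        then show ?thesis using False by (auto simp: pkern_def)
      qed
      finally show "psum b b m x y = pkern (zs ` {..<m}) id x y" .
    qed
    have bdual: "b \<in> ell2_dual uniform_roe"
      unfolding ell2_dual_def
    proof (intro CollectI conjI allI exI)
      show "b n \<in> uniform_roe" for n unfolding b_def by (rule sk_roe)
      show "knorm (psum b b m) \<le> 1" for m unfolding psb by (rule pkern_knorm) simp
    qed
    have key: "\<phi> b (xs k) (zs k) = 1" for k
    proof -
      define t where "t = sk (zs k) (zs k)"
      define E where "E = sk (xs k) (zs k)"
      define c where "c n = (if n = k then E else (\<lambda>_ _. 0))" for n
      have ceq: "(\<lambda>n. kmult (b n) t) = c"
        unfolding b_def t_def c_def E_def kmult_sk_sk using injz by (auto simp: inj_def intro!: ext)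
      have cA: "c n \<in> uniform_roe" for n unfolding c_def E_def by (auto intro: sk_roe zero_roe)
      have psc: "psum c c m = (if k < m then sk (zs k) (zs k) else (\<lambda>_ _. 0))" for m
      proof -
        have "psum c c m = (\<lambda>x y. \<Sum>n<m. if n = k then sk (zs k) (zs k) x y else 0)"
          unfolding psum_def c_def E_def by (intro ext sum.cong) (auto simp: kadj_sk kmult_sk_sk)
        then show ?thesis by (auto intro!: ext)
      qed
      have cdual: "c \<in> ell2_dual uniform_roe"
        unfolding ell2_dual_def
      proof (intro CollectI conjI allI exI)
        show "c n \<in> uniform_roe" for n by (rule cA)
        show "knorm (psum c c m) \<le> 1" for m unfolding psc by (auto intro: sk_knorm)
      qed
      have cmod: "c \<in> ell2_mod uniform_roe"
        unfolding ell2_mod_def pair_conv_def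
      proof (intro CollectI conjI allI exI)
        show "c n \<in> uniform_roe" for n by (rule cA)
        show "bounded_kernel (sk (zs k) (zs k))" by (rule sk_bounded)
        have "eventually (\<lambda>m. knorm (kdiff (psum c c m) (sk (zs k) (zs k))) = 0) sequentially"
          unfolding psc eventually_sequentially by (intro exI[of _ "Suc k"]) auto
        then show "(\<lambda>m. knorm (kdiff (psum c c m) (sk (zs k) (zs k)))) \<longlonglongrightarrow> 0"
          by (rule tendsto_eventually)
      qed
      have pc: "pair_conv (Tseq T) c (\<phi> c)" by (rule ph5[OF cmod])
      have psac: "psum (Tseq T) c m = (if k < m then E else (\<lambda>_ _. 0))" for m
      proof -
        have "psum (Tseq T) c m = (\<lambda>x y. \<Sum>n<m. if n = k then E x y else 0)"
          unfolding psum_def c_def E_def aval by (intro ext sum.cong) (auto simp: kadj_sk kmult_sk_sk)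
        then show ?thesis by (auto intro!: ext)
      qed
      have "knorm (kdiff E (\<phi> c)) = 0"
      proof (rule tendsto_const_eventually_zero)
        show "(\<lambda>m. knorm (kdiff (psum (Tseq T) c m) (\<phi> c))) \<longlonglongrightarrow> 0"
          using pc unfolding pair_conv_def by blast
        show "eventually (\<lambda>m. knorm (kdiff (psum (Tseq T) c m) (\<phi> c)) = knorm (kdiff E (\<phi> c))) sequentially"
          unfolding psac eventually_sequentially by (intro exI[of _ "Suc k"]) auto
      qed
      moreover have "bounded_kernel (kdiff E (\<phi> c))"
        using ph1[OF cdual] unfolding E_def uniform_roe_def by (auto intro: bounded_kdiff sk_bounded)
      ultimately have "cmod (kdiff E (\<phi> c) (xs k) (zs k)) \<le> 0"
        using entry_le_knorm by metis
      then have "\<phi> c (xs k) (zs k) = 1" by (simp add: kdiff_def E_def sk_def)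
      moreover have "\<phi> c = kmult (\<phi> b) t"
        using ph3[OF bdual sk_roe[of "zs k" "zs k"]] ceq unfolding t_def by simp
      ultimately show ?thesis unfolding t_def kmult_sk_right by simp
    qed
    have "\<phi> b \<in> uniform_roe" by (rule ph1[OF bdual])
    then have pb: "bounded_kernel (\<phi> b)"
      and "\<exists>s. bounded_kernel s \<and> finite_prop s \<and> knorm (kdiff (\<phi> b) s) < 1/2"
    proof -
      have "\<phi> b \<in> uniform_roe" by fact
      then have h1: "bounded_kernel (\<phi> b)" and h: "\<forall>e>0. \<exists>s. bounded_kernel s \<and> finite_prop s \<and> knorm (kdiff (\<phi> b) s) < e"
        unfolding uniform_roe_def by auto
      show "bounded_kernel (\<phi> b)" by (rule h1)
      show "\<exists>s. bounded_kernel s \<and> finite_prop s \<and> knorm (kdiff (\<phi> b) s) < 1/2"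
        by (rule h[rule_format]) simp
    qed
    then obtain s where s: "bounded_kernel (\<phi> b)" "bounded_kernel s" "finite_prop s"
        "knorm (kdiff (\<phi> b) s) < 1/2" by blast
    obtain L where L: "\<And>x y. dist x y \<ge> L \<Longrightarrow> s x y = 0" using s(3) unfolding finite_prop_def by blast
    define k where "k = nat (ceiling L)"
    have "dist (xs k) (zs k) \<ge> L"
      using dxz[of k] unfolding k_def by linarith
    then have "s (xs k) (zs k) = 0" by (rule L)
    then have "cmod (kdiff (\<phi> b) s (xs k) (zs k)) = 1" using key[of k] by (simp add: kdiff_def)
    moreover have "cmod (kdiff (\<phi> b) s (xs k) (zs k)) \<le> knorm (kdiff (\<phi> b) s)"
      by (rule entry_le_knorm[OF bounded_kdiff[OF s(1,2)]])
    ultimately show False using s(4) by simp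
  qed
  then show ?thesis using TM by blast
qed



abbreviation sqf :: "('a \<Rightarrow> complex) \<Rightarrow> 'a \<Rightarrow> real" where
  "sqf u \<equiv> (\<lambda>x. (cmod (u x))^2)"

lemma amgm_t:
  fixes a b t :: real
  assumes "t > 0"
  shows "a * b \<le> (t * a^2 + b^2 / t) / 2"
proof -
  have "0 \<le> (t*a - b)^2 / t" using assms by simp
  moreover have "(t*a - b)^2 / t = t * a^2 - 2*(a*b) + b^2 / t"
    using assms by (simp add: power2_eq_square field_simps)
  ultimately have "2*(a*b) \<le> t * a^2 + b^2 / t" by linarith
  then show ?thesis by simp
qed

lemma sq_le_infsum:
  assumes "sqf u summable_on UNIV"
  shows "(cmod (u x))^2 \<le> infsum (sqf u) UNIV"
proof -
  have "infsum (sqf u) {x} \<le> infsum (sqf u) UNIV"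
    by (rule infsum_mono_neutral) (use assms in auto)
  then show ?thesis by simp
qed

lemma l2norm_sq: "(l2norm u)^2 = infsum (sqf u) UNIV"
  unfolding l2norm_def by (simp add: infsum_nonneg)

lemma cs_summable:
  assumes su: "sqf u summable_on UNIV" and sv: "sqf v summable_on UNIV"
  shows "(\<lambda>x. norm (cnj (u x) * v x)) summable_on UNIV"
proof -
  have pw: "norm (cnj (u x) * v x) \<le> ((cmod (u x))^2 + (cmod (v x))^2) * (1/2)" for x
    using amgm_t[of 1 "cmod (u x)" "cmod (v x)"] by (simp add: norm_mult)
  have "(\<lambda>x. ((cmod (u x))^2 + (cmod (v x))^2) * (1/2)) summable_on UNIV"
    by (rule summable_on_cmult_left[OF summable_on_add[OF su sv]])
  then show ?thesis by (rule Infinite_Sum.abs_summable_on_comparison_test') (use pw in auto)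
qed

lemma sqrt_alg:
  fixes A B :: real
  assumes "A > 0" "B > 0"
  shows "(sqrt B / sqrt A * A + B / (sqrt B / sqrt A)) / 2 = sqrt A * sqrt B"
proof -
  have gen: "((b::real) / a * (a*a) + (b*b) / (b / a)) / 2 = a * b" if "a > 0" "b > 0" for a b
  proof -
    have 1: "b / a * (a*a) = a*b" and 2: "(b*b) / (b / a) = a * b" using that by (simp_all add: divide_simps)
    show ?thesis unfolding 1 2 by simp
  qed
  have e: "A = sqrt A * sqrt A" "B = sqrt B * sqrt B" using assms by simp_all
  have "(sqrt B / sqrt A * (sqrt A * sqrt A) + (sqrt B * sqrt B) / (sqrt B / sqrt A)) / 2 = sqrt A * sqrt B"
    by (rule gen) (use assms in simp_all)
  then show ?thesis by (simp only: e[symmetric])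
qed

lemma cs_infsum:
  assumes su: "sqf u summable_on UNIV" and sv: "sqf v summable_on UNIV"
  shows "cmod (infsum (\<lambda>x. cnj (u x) * v x) UNIV) \<le> l2norm u * l2norm v"
proof -
  have abs: "(\<lambda>x. norm (cnj (u x) * v x)) summable_on UNIV" by (rule cs_summable[OF su sv])
  let ?A = "infsum (sqf u) UNIV" and ?B = "infsum (sqf v) UNIV"
  have A0: "?A \<ge> 0" and B0: "?B \<ge> 0" by (auto intro: infsum_nonneg)
  have n1: "cmod (infsum (\<lambda>x. cnj (u x) * v x) UNIV) \<le> infsum (\<lambda>x. cmod (u x) * cmod (v x)) UNIV"
  proof -
    have eqf: "(\<lambda>x. norm (cnj (u x) * v x)) = (\<lambda>x. cmod (u x) * cmod (v x))"
      by (rule ext) (simp only: norm_mult complex_mod_cnj)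
    show ?thesis using norm_infsum_bound[OF abs] unfolding eqf .
  qed
  have sprod: "(\<lambda>x. cmod (u x) * cmod (v x)) summable_on UNIV"
  proof -
    have eqf: "(\<lambda>x. norm (cnj (u x) * v x)) = (\<lambda>x. cmod (u x) * cmod (v x))"
      by (rule ext) (simp only: norm_mult complex_mod_cnj)
    show ?thesis using abs unfolding eqf .
  qed
  show ?thesis
  proof (cases "?A = 0 \<or> ?B = 0")
    case True
    then have "\<forall>x. cnj (u x) * v x = 0"
    proof
      assume "?A = 0"
      then have "u x = 0" for x using sq_le_infsum[OF su, of x] by simp
      then show ?thesis by simp
    next
      assume "?B = 0"
      then have "v x = 0" for x using sq_le_infsum[OF sv, of x] by simp
      then show ?thesis by simp
    qed
    then have "(\<lambda>x. cnj (u x) * v x) = (\<lambda>_. 0)" by auto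
    then have "infsum (\<lambda>x. cnj (u x) * v x) UNIV = 0" by (simp only: infsum_0_simp)
    then show ?thesis using mult_nonneg_nonneg[OF l2norm_nonneg l2norm_nonneg, of u v] by simp
  next
    case False
    then have Ap: "?A > 0" and Bp: "?B > 0" using A0 B0 by auto
    define t where "t = sqrt ?B / sqrt ?A"
    have tp: "t > 0" unfolding t_def using Ap Bp by simp
    define g where "g x = (t * sqf u x + sqf v x * (1/t)) * (1/2)" for x
    have pg: "cmod (u x) * cmod (v x) \<le> g x" for x
    proof -
      have eq: "(p + q / t) / 2 = (p + q * (1/t)) * (1/2)" for p q :: real by simp
      show ?thesis using amgm_t[OF tp, of "cmod (u x)" "cmod (v x)"] unfolding g_def eq .
    qed
    have s1: "(\<lambda>x. t * sqf u x) summable_on UNIV" by (rule summable_on_cmult_right[OF su])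
    have s2: "(\<lambda>x. sqf v x * (1/t)) summable_on UNIV" by (rule summable_on_cmult_left[OF sv])
    have s12: "(\<lambda>x. t * sqf u x + sqf v x * (1/t)) summable_on UNIV" by (rule summable_on_add[OF s1 s2])
    have sg: "g summable_on UNIV" unfolding g_def by (rule summable_on_cmult_left[OF s12])
    have "infsum (\<lambda>x. cmod (u x) * cmod (v x)) UNIV \<le> infsum g UNIV"
      by (rule infsum_mono[OF sprod sg]) (rule pg)
    also have "infsum g UNIV = (t * ?A + ?B * (1/t)) * (1/2)"
    proof -
      have "infsum g UNIV = infsum (\<lambda>x. t * sqf u x + sqf v x * (1/t)) UNIV * (1/2)"
        unfolding g_def by (rule infsum_cmult_left')
      also have "infsum (\<lambda>x. t * sqf u x + sqf v x * (1/t)) UNIV = infsum (\<lambda>x. t * sqf u x) UNIV + infsum (\<lambda>x. sqf v x * (1/t)) UNIV"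
        by (rule infsum_add[OF s1 s2])
      also have "infsum (\<lambda>x. t * sqf u x) UNIV = t * ?A" by (rule infsum_cmult_right')
      also have "infsum (\<lambda>x. sqf v x * (1/t)) UNIV = ?B * (1/t)" by (rule infsum_cmult_left')
      finally show ?thesis .
    qed
    also have "(t * ?A + ?B * (1/t)) * (1/2) = (t * ?A + ?B / t) / 2" by simp
    also have "\<dots> = sqrt ?A * sqrt ?B"
      unfolding t_def by (rule sqrt_alg[OF Ap Bp])
    finally have X: "infsum (\<lambda>x. cmod (u x) * cmod (v x)) UNIV \<le> sqrt ?A * sqrt ?B" .
    show ?thesis unfolding l2norm_def by (rule order_trans[OF n1 X])
  qed
qed



lemma cnj_mult_self: "cnj z * z = complex_of_real ((cmod z)^2)"
  by (metis complex_mult_cnj cmod_power2 mult.commute)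

lemma fin_supp_summable: "fin_supp f \<Longrightarrow> sqf f summable_on UNIV"
  unfolding fin_supp_def by (rule summable_fin[of "{x. f x \<noteq> 0}"]) auto

lemma l2norm_div:
  assumes "c > 0"
  shows "l2norm (\<lambda>x. u x / complex_of_real c) = l2norm u / c"
proof -
  have e: "sqf (\<lambda>x. u x / complex_of_real c) = (\<lambda>x. sqf u x * (1 / c^2))"
    using assms by (auto simp: norm_divide power_divide intro!: ext)
  have eq: "infsum (sqf (\<lambda>x. u x / complex_of_real c)) UNIV = infsum (sqf u) UNIV * (1 / c^2)"
    unfolding e by (rule infsum_cmult_left')
  have sc: "sqrt (1 / c^2) = 1 / c" using assms by (simp add: real_sqrt_divide)
  show ?thesis unfolding l2norm_def eq real_sqrt_mult sc by simp
qed

lemma knorm_scale: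
  assumes bk: "bounded_kernel k" and f: "fin_supp f"
  shows "l2norm (kapply k f) \<le> knorm k * l2norm f"
proof (cases "l2norm f = 0")
  case True
  have "infsum (sqf f) UNIV = 0" using True l2norm_sq[of f] by simp
  then have "f x = 0" for x using sq_le_infsum[OF fin_supp_summable[OF f], of x] by simp
  then have "f = (\<lambda>_. 0)" by auto
  then have "kapply k f = (\<lambda>_. 0)" unfolding kapply_def by auto
  then show ?thesis using True by simp
next
  case False
  define c where "c = l2norm f"
  have cp: "c > 0" using False l2norm_nonneg[of f] unfolding c_def by simp
  define g where "g x = f x / complex_of_real c" for x
  have sg: "{x. g x \<noteq> 0} = {x. f x \<noteq> 0}" unfolding g_def using cp by auto
  have fg: "fin_supp g" using f unfolding fin_supp_def sg .
  have "l2norm g = l2norm f / c" unfolding g_def by (rule l2norm_div[OF cp])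
  then have lg: "l2norm g = 1" unfolding c_def using False by simp
  have kg: "kapply k g = (\<lambda>y. kapply k f y / complex_of_real c)"
    unfolding kapply_def sg unfolding g_def by (auto simp: sum_divide_distrib intro!: ext)
  have "l2norm (kapply k g) \<le> knorm k" by (rule knorm_upper[OF bk fg]) (simp add: lg)
  then have "l2norm (kapply k f) / c \<le> knorm k" unfolding kg l2norm_div[OF cp] .
  then show ?thesis using cp unfolding c_def[symmetric] by (simp add: divide_le_eq mult.commute)
qed

definition ipf :: "('a \<Rightarrow> complex) \<Rightarrow> ('a \<Rightarrow> complex) \<Rightarrow> complex" where
  "ipf h u = (\<Sum>x\<in>{x. h x \<noteq> 0}. cnj (h x) * u x)"

lemma l2_from_dual:
  assumes B: "B \<ge> 0"
    and H: "\<And>h. fin_supp h \<Longrightarrow> cmod (ipf h u) \<le> B * l2norm h"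
  shows "sqf u summable_on UNIV \<and> l2norm u \<le> B"
proof -
  have fin_bound: "sum (sqf u) G \<le> B^2" if G: "finite G" for G
  proof -
    define h where "h x = (if x \<in> G then u x else 0)" for x
    have hs: "{x. h x \<noteq> 0} \<subseteq> G" unfolding h_def by auto
    have fh: "fin_supp h" unfolding fin_supp_def using hs G finite_subset by blast
    define S where "S = sum (sqf u) G"
    have S0: "S \<ge> 0" unfolding S_def by (simp add: sum_nonneg)
    have "ipf h u = (\<Sum>x\<in>G. cnj (h x) * u x)"
      unfolding ipf_def by (rule sum.mono_neutral_left[OF G hs]) auto
    also have "\<dots> = (\<Sum>x\<in>G. complex_of_real (sqf u x))"
      by (rule sum.cong) (auto simp: h_def cnj_mult_self)
    also have "\<dots> = complex_of_real S" unfolding S_def by simp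
    finally have ip: "ipf h u = complex_of_real S" .
    have "infsum (sqf h) UNIV = sum (sqf h) G"
      by (rule infsum_fin[OF G]) (auto simp: h_def)
    also have "\<dots> = S" unfolding S_def by (rule sum.cong) (auto simp: h_def)
    finally have lh: "l2norm h = sqrt S" unfolding l2norm_def by simp
    have "S \<le> B * sqrt S" using H[OF fh] unfolding ip lh using S0 by simp
    then have "sqrt S * sqrt S \<le> B * sqrt S" using S0 by simp
    then have "sqrt S \<le> B"
    proof (cases "sqrt S = 0")
      case True
      then show ?thesis using B by simp
    next
      case False
      then have "sqrt S > 0" using S0 by simp
      then show ?thesis using mult_right_le_imp_le[OF \<open>sqrt S * sqrt S \<le> B * sqrt S\<close>] by blast
    qed
    then have "(sqrt S)^2 \<le> B^2" by (rule power_mono) (simp add: S0)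
    then show ?thesis using S0 unfolding S_def by simp
  qed
  have su: "sqf u summable_on UNIV"
    by (rule nonneg_bdd_above_summable_on) (auto simp: bdd_above_def intro!: exI[of _ "B^2"] fin_bound)
  have "infsum (sqf u) UNIV \<le> B^2" by (rule infsum_le_finite_sums[OF su]) (use fin_bound in auto)
  then have "l2norm u \<le> sqrt (B^2)" unfolding l2norm_def by (rule real_sqrt_le_mono)
  then show ?thesis using su B by simp
qed

lemma infsum_sum_swap:
  fixes f :: "'i \<Rightarrow> 'a \<Rightarrow> complex"
  assumes "finite I" "\<And>i. i \<in> I \<Longrightarrow> f i summable_on A"
  shows "(\<lambda>w. \<Sum>i\<in>I. f i w) summable_on A \<and> infsum (\<lambda>w. \<Sum>i\<in>I. f i w) A = (\<Sum>i\<in>I. infsum (f i) A)"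
  using assms
proof (induction I rule: finite_induct)
  case empty
  then show ?case by simp
next
  case (insert i I)
  have s1: "f i summable_on A" using insert.prems by simp
  have ih: "(\<lambda>w. \<Sum>i\<in>I. f i w) summable_on A \<and> infsum (\<lambda>w. \<Sum>i\<in>I. f i w) A = (\<Sum>i\<in>I. infsum (f i) A)"
    using insert.IH insert.prems by simp
  have e: "(\<lambda>w. \<Sum>j\<in>insert i I. f j w) = (\<lambda>w. f i w + (\<Sum>j\<in>I. f j w))"
    using insert.hyps by (simp add: sum.insert)
  show ?case unfolding e using insert.hyps s1 ih
    by (simp add: summable_on_add infsum_add)
qed



lemma col_summable:
  assumes "bounded_kernel a"
  shows "sqf (\<lambda>w. a w x) summable_on UNIV"
proof -
  obtain C where C: "\<And>f. fin_supp f \<Longrightarrow>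
      sqf (kapply a f) summable_on UNIV \<and> l2norm (kapply a f) \<le> C * l2norm f"
    using bounded_kernelD[OF assms] by metis
  show ?thesis using C[OF fin_supp_delta[of x]] unfolding kapply_delta by simp
qed

lemma kmult_adj: "kmult (kadj a) b x y = infsum (\<lambda>w. cnj (a w x) * b w y) UNIV"
  unfolding kmult_def kadj_def by simp

lemma prod_summable:
  assumes "bounded_kernel a" "bounded_kernel b"
  shows "(\<lambda>w. cnj (a w x) * b w y) summable_on UNIV"
  by (rule Infinite_Sum.abs_summable_summable[OF cs_summable[OF col_summable[OF assms(1)] col_summable[OF assms(2)]]])

lemma pointwise_alg:
  "cnj (\<Sum>x\<in>H. a x * h x) * (\<Sum>y\<in>F. b y * f y) = (\<Sum>x\<in>H. \<Sum>y\<in>F. cnj (h x) * (cnj (a x) * b y) * f y)"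
  by (simp add: cnj_sum sum_product algebra_simps) (rule sum.swap)

lemma one_term:
  assumes ba: "bounded_kernel a" and H: "finite H" and F: "finite F"
  shows "(\<Sum>x\<in>H. \<Sum>y\<in>F. cnj (h x) * kmult (kadj a) a x y * f y)
       = infsum (\<lambda>w. cnj (\<Sum>x\<in>H. a w x * h x) * (\<Sum>y\<in>F. a w y * f y)) UNIV"
proof -
  let ?g = "\<lambda>x y w. cnj (h x) * (cnj (a w x) * a w y) * f y"
  have tm: "cnj (h x) * kmult (kadj a) a x y * f y = infsum (?g x y) UNIV" for x y
    unfolding kmult_adj infsum_cmult_left' infsum_cmult_right' by (rule refl)
  have sm: "?g x y summable_on UNIV" for x y
    by (intro summable_on_cmult_left summable_on_cmult_right prod_summable[OF ba ba])
  have inner: "(\<lambda>w. \<Sum>y\<in>F. ?g x y w) summable_on UNIV \<and> infsum (\<lambda>w. \<Sum>y\<in>F. ?g x y w) UNIV = (\<Sum>y\<in>F. infsum (?g x y) UNIV)" for x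
    by (rule infsum_sum_swap[OF F]) (rule sm)
  have outer: "(\<lambda>w. \<Sum>x\<in>H. \<Sum>y\<in>F. ?g x y w) summable_on UNIV \<and> infsum (\<lambda>w. \<Sum>x\<in>H. \<Sum>y\<in>F. ?g x y w) UNIV = (\<Sum>x\<in>H. infsum (\<lambda>w. \<Sum>y\<in>F. ?g x y w) UNIV)"
    by (rule infsum_sum_swap[OF H]) (use inner in blast)
  have "(\<Sum>x\<in>H. \<Sum>y\<in>F. cnj (h x) * kmult (kadj a) a x y * f y) = (\<Sum>x\<in>H. \<Sum>y\<in>F. infsum (?g x y) UNIV)"
    unfolding tm by (rule refl)
  also have "\<dots> = (\<Sum>x\<in>H. infsum (\<lambda>w. \<Sum>y\<in>F. ?g x y w) UNIV)"
    using inner by simp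
  also have "\<dots> = infsum (\<lambda>w. \<Sum>x\<in>H. \<Sum>y\<in>F. ?g x y w) UNIV"
    using outer by simp
  also have "\<dots> = infsum (\<lambda>w. cnj (\<Sum>x\<in>H. a w x * h x) * (\<Sum>y\<in>F. a w y * f y)) UNIV"
    unfolding pointwise_alg by (rule refl)
  finally show ?thesis .
qed

lemma psum_ident:
  assumes ba: "\<And>n. n < m \<Longrightarrow> bounded_kernel (a n)" and fh: "fin_supp h" and ff: "fin_supp f"
  shows "ipf h (kapply (psum a a m) f) = (\<Sum>n<m. infsum (\<lambda>w. cnj (kapply (a n) h w) * kapply (a n) f w) UNIV)"
proof -
  let ?H = "{x. h x \<noteq> 0}" and ?F = "{x. f x \<noteq> 0}"
  have H: "finite ?H" and F: "finite ?F" using fh ff unfolding fin_supp_def by auto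
  let ?K = "\<lambda>n x y. kmult (kadj (a n)) (a n) x y"
  have "ipf h (kapply (psum a a m) f) = (\<Sum>x\<in>?H. cnj (h x) * (\<Sum>y\<in>?F. (\<Sum>n<m. ?K n x y) * f y))"
    unfolding ipf_def kapply_def psum_def by (rule refl)
  also have "\<dots> = (\<Sum>x\<in>?H. \<Sum>y\<in>?F. \<Sum>n<m. cnj (h x) * ?K n x y * f y)"
    by (simp add: sum_distrib_left sum_distrib_right mult.assoc)
  also have "\<dots> = (\<Sum>x\<in>?H. \<Sum>n<m. \<Sum>y\<in>?F. cnj (h x) * ?K n x y * f y)"
    by (rule sum.cong[OF refl]) (rule sum.swap)
  also have "\<dots> = (\<Sum>n<m. \<Sum>x\<in>?H. \<Sum>y\<in>?F. cnj (h x) * ?K n x y * f y)"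
    by (rule sum.swap)
  also have "\<dots> = (\<Sum>n<m. infsum (\<lambda>w. cnj (kapply (a n) h w) * kapply (a n) f w) UNIV)"
    by (rule sum.cong[OF refl]) (simp add: one_term[OF ba H F] kapply_def)
  finally show ?thesis .
qed



lemma bk_sum: "bounded_kernel k \<Longrightarrow> fin_supp f \<Longrightarrow> sqf (kapply k f) summable_on UNIV"
  using bounded_kernelD by metis

lemma knorm_nonneg:
  assumes "bounded_kernel k"
  shows "knorm k \<ge> 0"
proof -
  have "kapply k (\<lambda>_. 0) = (\<lambda>_. 0)" unfolding kapply_def by auto
  then show ?thesis using knorm_upper[OF assms fin_supp_zero] by simp
qed

lemma bounded_psum:
  assumes ba: "\<And>n. n < m \<Longrightarrow> bounded_kernel (a n)"
  shows "bounded_kernel (psum a a m)"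
  unfolding bounded_kernel_def
proof (intro exI[of _ "\<Sum>n<m. (knorm (a n))^2"] allI impI)
  fix f :: "'a \<Rightarrow> complex" assume ff: "fin_supp f"
  let ?B = "(\<Sum>n<m. (knorm (a n))^2) * l2norm f"
  have "sqf (kapply (psum a a m) f) summable_on UNIV \<and> l2norm (kapply (psum a a m) f) \<le> ?B"
  proof (rule l2_from_dual)
    show "?B \<ge> 0" by (simp add: sum_nonneg l2norm_nonneg)
    fix h :: "'a \<Rightarrow> complex" assume fh: "fin_supp h"
    have "cmod (ipf h (kapply (psum a a m) f)) = cmod (\<Sum>n<m. infsum (\<lambda>w. cnj (kapply (a n) h w) * kapply (a n) f w) UNIV)"
      by (rule arg_cong[where f=cmod], rule psum_ident[OF ba fh ff])
    also have "\<dots> \<le> (\<Sum>n<m. cmod (infsum (\<lambda>w. cnj (kapply (a n) h w) * kapply (a n) f w) UNIV))"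
      by (rule norm_sum)
    also have "\<dots> \<le> (\<Sum>n<m. l2norm (kapply (a n) h) * l2norm (kapply (a n) f))"
      by (rule sum_mono) (auto intro!: cs_infsum bk_sum ba fh ff)
    also have "\<dots> \<le> (\<Sum>n<m. (knorm (a n) * l2norm h) * (knorm (a n) * l2norm f))"
      by (rule sum_mono) (auto intro!: mult_mono knorm_scale ba fh ff l2norm_nonneg mult_nonneg_nonneg knorm_nonneg)
    also have "\<dots> = ?B * l2norm h"
      by (simp add: sum_distrib_right sum_distrib_left power2_eq_square algebra_simps)
    finally show "cmod (ipf h (kapply (psum a a m) f)) \<le> ?B * l2norm h" .
  qed
  then show "sqf (kapply (psum a a m) f) summable_on UNIV \<and> l2norm (kapply (psum a a m) f) \<le> (\<Sum>n<m. (knorm (a n))^2) * l2norm f"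
    by simp
qed

lemma slice_summable:
  fixes g :: "'a \<times> nat \<Rightarrow> real"
  assumes "g summable_on UNIV"
  shows "(\<lambda>y. g (y, n)) summable_on UNIV"
proof -
  have "g summable_on range (\<lambda>y. (y, n))" by (rule summable_on_subset[OF assms]) auto
  then show ?thesis by (subst (asm) summable_on_reindex) (auto simp: inj_on_def comp_def)
qed

lemma slice_infsum:
  fixes g :: "'a \<times> nat \<Rightarrow> real"
  shows "infsum g (range (\<lambda>y. (y, n))) = infsum (\<lambda>y. g (y, n)) UNIV"
  by (subst infsum_reindex) (auto simp: inj_on_def comp_def)

lemma slices_le:
  fixes g :: "'a \<times> nat \<Rightarrow> real"
  assumes sg: "g summable_on UNIV" and g0: "\<And>p. g p \<ge> 0"
  shows "(\<Sum>n<m. infsum (\<lambda>y. g (y, n)) UNIV) \<le> infsum g UNIV"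
proof -
  have sub: "g summable_on range (\<lambda>y. (y, n))" for n by (rule summable_on_subset[OF sg]) auto
  have "(\<Sum>n<m. infsum (\<lambda>y. g (y, n)) UNIV) = (\<Sum>n<m. infsum g (range (\<lambda>y. (y, n))))"
    by (simp add: slice_infsum)
  also have "\<dots> = infsum g (\<Union>n<m. range (\<lambda>y. (y, n)))"
    by (rule sum_infsum) (auto intro: sub)
  also have "\<dots> \<le> infsum g UNIV"
  proof (rule infsum_mono_neutral)
    show "g summable_on (\<Union>n<m. range (\<lambda>y. (y, n)))" by (rule summable_on_subset[OF sg]) auto
  qed (use sg g0 in auto)
  finally show ?thesis .
qed

lemma kapply_Tseq: "kapply (Tseq K n) f y = kapply K f (y, n)"
  unfolding kapply_def Tseq_def by simp

lemma Tseq_bound: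
  assumes "fin_supp f" "sqf (kapply K f) summable_on UNIV"
  shows "sqf (kapply (Tseq K n) f) summable_on UNIV \<and> l2norm (kapply (Tseq K n) f) \<le> l2norm (kapply K f)"
proof
  have e: "sqf (kapply (Tseq K n) f) = (\<lambda>y. sqf (kapply K f) (y, n))" by (simp add: kapply_Tseq)
  show "sqf (kapply (Tseq K n) f) summable_on UNIV" unfolding e by (rule slice_summable[OF assms(2)])
  have "(\<Sum>j<Suc n. infsum (\<lambda>y. sqf (kapply K f) (y, j)) UNIV) \<le> infsum (sqf (kapply K f)) UNIV"
    by (rule slices_le[OF assms(2)]) simp
  moreover have "infsum (\<lambda>y. sqf (kapply K f) (y, n)) UNIV \<le> (\<Sum>j<Suc n. infsum (\<lambda>y. sqf (kapply K f) (y, j)) UNIV)"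
    by (rule member_le_sum) (auto intro: infsum_nonneg)
  ultimately show "l2norm (kapply (Tseq K n) f) \<le> l2norm (kapply K f)"
    unfolding l2norm_def e by simp
qed

lemma Tseq_bounded: "bounded_kernel K \<Longrightarrow> bounded_kernel (Tseq K n)"
proof -
  assume bK: "bounded_kernel K"
  obtain C where C: "C \<ge> 0" "\<And>f. fin_supp f \<Longrightarrow> sqf (kapply K f) summable_on UNIV \<and> l2norm (kapply K f) \<le> C * l2norm f"
    using bounded_kernelD[OF bK] by metis
  show ?thesis unfolding bounded_kernel_def
  proof (intro exI[of _ C] allI impI)
    fix f :: "'a \<Rightarrow> complex" assume ff: "fin_supp f"
    have "sqf (kapply (Tseq K n) f) summable_on UNIV \<and> l2norm (kapply (Tseq K n) f) \<le> l2norm (kapply K f)"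
      by (rule Tseq_bound[OF ff]) (use C(2)[OF ff] in simp)
    then show "sqf (kapply (Tseq K n) f) summable_on UNIV \<and> l2norm (kapply (Tseq K n) f) \<le> C * l2norm f"
      using C(2)[OF ff] by auto
  qed
qed



lemma infsum_ofr:
  assumes "g summable_on A"
  shows "infsum (\<lambda>x. complex_of_real (g x)) A = complex_of_real (infsum g A)"
  by (rule infsumI, rule has_sum_of_real, rule has_sum_infsum[OF assms])

lemma L2_slices:
  assumes "sqf (kapply K g) summable_on UNIV"
  shows "L2_set (\<lambda>n. l2norm (kapply (Tseq K n) g)) {..<m} \<le> l2norm (kapply K g)"
proof -
  have e: "sqf (kapply (Tseq K n) g) = (\<lambda>y. sqf (kapply K g) (y, n))" for n by (simp add: kapply_Tseq)
  have "(\<Sum>n<m. (l2norm (kapply (Tseq K n) g))^2) = (\<Sum>n<m. infsum (\<lambda>y. sqf (kapply K g) (y, n)) UNIV)"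
    by (simp add: l2norm_sq e)
  also have "\<dots> \<le> infsum (sqf (kapply K g)) UNIV" by (rule slices_le[OF assms]) simp
  finally show ?thesis unfolding L2_set_def l2norm_def by (rule real_sqrt_le_mono)
qed

lemma knorm_psum_Tseq:
  assumes C0: "C \<ge> 0" and C: "\<And>f. fin_supp f \<Longrightarrow> sqf (kapply K f) summable_on UNIV \<and> l2norm (kapply K f) \<le> C * l2norm f"
  shows "knorm (psum (Tseq K) (Tseq K) m) \<le> C^2"
proof (rule knorm_least)
  have bK: "bounded_kernel K" unfolding bounded_kernel_def using C by blast
  have ba: "\<And>n. n < m \<Longrightarrow> bounded_kernel (Tseq K n)" using Tseq_bounded[OF bK] by blast
  fix f :: "'a \<Rightarrow> complex" assume ff: "fin_supp f" and f1: "l2norm f \<le> 1"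
  let ?a = "Tseq K"
  let ?B = "C^2 * l2norm f"
  have "sqf (kapply (psum ?a ?a m) f) summable_on UNIV \<and> l2norm (kapply (psum ?a ?a m) f) \<le> ?B"
  proof (rule l2_from_dual)
    show "?B \<ge> 0" by (simp add: l2norm_nonneg)
    fix h :: "'a \<Rightarrow> complex" assume fh: "fin_supp h"
    have "cmod (ipf h (kapply (psum ?a ?a m) f)) = cmod (\<Sum>n<m. infsum (\<lambda>w. cnj (kapply (?a n) h w) * kapply (?a n) f w) UNIV)"
      by (rule arg_cong[where f=cmod], rule psum_ident[OF ba fh ff])
    also have "\<dots> \<le> (\<Sum>n<m. cmod (infsum (\<lambda>w. cnj (kapply (?a n) h w) * kapply (?a n) f w) UNIV))"
      by (rule norm_sum)
    also have "\<dots> \<le> (\<Sum>n<m. l2norm (kapply (?a n) h) * l2norm (kapply (?a n) f))"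
      by (rule sum_mono) (auto intro!: cs_infsum bk_sum ba fh ff)
    also have "\<dots> = (\<Sum>n<m. \<bar>l2norm (kapply (?a n) h)\<bar> * \<bar>l2norm (kapply (?a n) f)\<bar>)"
      by (simp add: l2norm_nonneg)
    also have "\<dots> \<le> L2_set (\<lambda>n. l2norm (kapply (?a n) h)) {..<m} * L2_set (\<lambda>n. l2norm (kapply (?a n) f)) {..<m}"
      by (rule L2_set_mult_ineq)
    also have "\<dots> \<le> l2norm (kapply K h) * l2norm (kapply K f)"
      by (rule mult_mono) (auto intro!: L2_slices C[THEN conjunct1] fh ff L2_set_nonneg l2norm_nonneg)
    also have "\<dots> \<le> (C * l2norm h) * (C * l2norm f)"
      by (rule mult_mono) (auto intro!: C[THEN conjunct2] fh ff l2norm_nonneg mult_nonneg_nonneg C0)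
    also have "\<dots> = ?B * l2norm h" by (simp add: power2_eq_square algebra_simps)
    finally show "cmod (ipf h (kapply (psum ?a ?a m) f)) \<le> ?B * l2norm h" .
  qed
  then have "l2norm (kapply (psum ?a ?a m) f) \<le> C^2 * l2norm f" by simp
  also have "\<dots> \<le> C^2" using f1 by (simp add: mult_left_le)
  finally show "l2norm (kapply (psum ?a ?a m) f) \<le> C^2" .
qed

lemma Tseq_in_dual:
  assumes "bounded_kernel K"
  shows "Tseq K \<in> ell2_dual bounded_ops"
proof -
  obtain C where C0: "C \<ge> 0" and C: "\<And>f. fin_supp f \<Longrightarrow> sqf (kapply K f) summable_on UNIV \<and> l2norm (kapply K f) \<le> C * l2norm f"
    using bounded_kernelD[OF assms] by metis
  show ?thesis unfolding ell2_dual_def bounded_ops_def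
    using Tseq_bounded[OF assms] knorm_psum_Tseq[OF C0 C] by blast
qed



lemma ipf_infsum: "fin_supp h \<Longrightarrow> ipf h u = infsum (\<lambda>x. cnj (h x) * u x) UNIV"
  unfolding ipf_def fin_supp_def by (rule infsum_fin[symmetric]) auto

lemma psum_quad:
  assumes ba: "\<And>n. bounded_kernel (a n)" and bC: "knorm (psum a a m) \<le> C" and ff: "fin_supp f"
  shows "(\<Sum>n<m. infsum (sqf (kapply (a n) f)) UNIV) \<le> max C 0 * (l2norm f)^2"
proof -
  let ?S = "psum a a m"
  have bS: "bounded_kernel ?S" by (rule bounded_psum) (rule ba)
  define X where "X = (\<Sum>n<m. infsum (sqf (kapply (a n) f)) UNIV)"
  have X0: "X \<ge> 0" unfolding X_def by (intro sum_nonneg infsum_nonneg) auto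
  have "ipf f (kapply ?S f) = (\<Sum>n<m. infsum (\<lambda>w. cnj (kapply (a n) f w) * kapply (a n) f w) UNIV)"
    by (rule psum_ident[OF ba ff ff])
  also have "\<dots> = (\<Sum>n<m. complex_of_real (infsum (sqf (kapply (a n) f)) UNIV))"
    by (rule sum.cong[OF refl]) (simp only: cnj_mult_self infsum_ofr[OF bk_sum[OF ba ff]])
  also have "\<dots> = complex_of_real X" unfolding X_def by simp
  finally have ip: "ipf f (kapply ?S f) = complex_of_real X" .
  have "X = cmod (ipf f (kapply ?S f))" using X0 unfolding ip by simp
  also have "\<dots> \<le> l2norm f * l2norm (kapply ?S f)"
    unfolding ipf_infsum[OF ff] by (rule cs_infsum[OF fin_supp_summable[OF ff] bk_sum[OF bS ff]])
  also have "\<dots> \<le> l2norm f * (knorm ?S * l2norm f)"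
    by (rule mult_left_mono[OF knorm_scale[OF bS ff] l2norm_nonneg])
  also have "\<dots> \<le> l2norm f * (max C 0 * l2norm f)"
    using bC by (intro mult_left_mono mult_right_mono) (auto simp: l2norm_nonneg)
  also have "\<dots> = max C 0 * (l2norm f)^2" by (simp add: power2_eq_square)
  finally show ?thesis unfolding X_def .
qed

lemma kernel_from_dual:
  fixes a :: "nat \<Rightarrow> ('a, 'a) kernel"
  assumes ba: "\<And>n. bounded_kernel (a n)" and bC: "\<And>m. knorm (psum a a m) \<le> C"
  shows "bounded_kernel (\<lambda>p x. a (snd p) (fst p) x)"
  unfolding bounded_kernel_def
proof (intro exI[of _ "sqrt (max C 0)"] allI impI)
  let ?K = "\<lambda>p x. a (snd p) (fst p) x"
  fix f :: "'a \<Rightarrow> complex" assume ff: "fin_supp f"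
  let ?g = "sqf (kapply ?K f)"
  have kK: "kapply ?K f (y, n) = kapply (a n) f y" for y n unfolding kapply_def by simp
  have slice_s: "?g summable_on range (\<lambda>y. (y, n))" for n
    by (subst summable_on_reindex) (auto simp: inj_on_def comp_def kK intro: bk_sum[OF ba ff])
  have fin_bound: "sum ?g G \<le> max C 0 * (l2norm f)^2" if G: "finite G" for G
  proof -
    define m where "m = Suc (Max (insert 0 (snd ` G)))"
    let ?U = "\<Union>n<m. range (\<lambda>y. (y, n))"
    have GU: "G \<subseteq> ?U"
    proof
      fix p assume "p \<in> G"
      then have "snd p \<le> Max (insert 0 (snd ` G))" using G by (intro Max_ge) auto
      then have "snd p < m" unfolding m_def by simp
      then show "p \<in> ?U" by (cases p) auto
    qed
    have sU: "?g summable_on ?U"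
      by (rule summable_on_finite_union_disjoint) (auto intro: slice_s)
    have "sum ?g G \<le> infsum ?g ?U"
      by (rule finite_sum_le_infsum[OF sU G GU]) simp
    also have "\<dots> = (\<Sum>n<m. infsum ?g (range (\<lambda>y. (y, n))))"
      by (rule sum_infsum[symmetric]) (auto intro: slice_s)
    also have "\<dots> = (\<Sum>n<m. infsum (sqf (kapply (a n) f)) UNIV)"
      by (rule sum.cong[OF refl]) (simp add: slice_infsum kK)
    also have "\<dots> \<le> max C 0 * (l2norm f)^2" by (rule psum_quad[OF ba bC ff])
    finally show ?thesis .
  qed
  have sg: "?g summable_on UNIV"
    by (rule nonneg_bdd_above_summable_on) (auto simp: bdd_above_def intro!: exI[of _ "max C 0 * (l2norm f)^2"] fin_bound)
  have "infsum ?g UNIV \<le> max C 0 * (l2norm f)^2"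
    by (rule infsum_le_finite_sums[OF sg]) (use fin_bound in auto)
  then have "l2norm (kapply ?K f) \<le> sqrt (max C 0 * (l2norm f)^2)"
    unfolding l2norm_def by (rule real_sqrt_le_mono)
  also have "\<dots> = sqrt (max C 0) * l2norm f" by (simp add: real_sqrt_mult l2norm_nonneg)
  finally show "?g summable_on UNIV \<and> l2norm (kapply ?K f) \<le> sqrt (max C 0) * l2norm f"
    using sg by simp
qed

lemma Tseq_image: "Tseq ` {k. bounded_kernel k} = ell2_dual (bounded_ops :: ('a,'a) kernel set)"
proof
  show "Tseq ` {k. bounded_kernel k} \<subseteq> ell2_dual bounded_ops"
    using Tseq_in_dual by blast
  show "ell2_dual bounded_ops \<subseteq> Tseq ` {k :: ('a \<times> nat, 'a) kernel. bounded_kernel k}"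
  proof
    fix a :: "nat \<Rightarrow> ('a,'a) kernel" assume "a \<in> ell2_dual bounded_ops"
    then obtain C where ba: "\<And>n. bounded_kernel (a n)" and bC: "\<And>m. knorm (psum a a m) \<le> C"
      unfolding ell2_dual_def bounded_ops_def by blast
    have "Tseq (\<lambda>p x. a (snd p) (fst p) x) = a" unfolding Tseq_def by simp
    then show "a \<in> Tseq ` {k. bounded_kernel k}"
      using kernel_from_dual[OF ba bC] by (metis (mono_tags, lifting) image_eqI mem_Collect_eq)
  qed
qed


lemma bounded_dist:
  assumes "bounded (UNIV::'a::metric_space set)"
  obtains e where "\<And>x y::'a. dist x y \<le> e"
proof -
  obtain x0 e where e: "\<And>y::'a. dist x0 y \<le> e" using assms unfolding bounded_def by blast
  have "dist x y \<le> 2*e" for x y :: 'a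
    using dist_triangle3[of x y x0] e[of x] e[of y] by (simp add: dist_commute)
  then show ?thesis using that by blast
qed

lemma part1:
  assumes bnd: "bounded (UNIV::'a::metric_space set)"
  shows "(M_XN :: ('a \<times> nat, 'a) kernel set) = {k. bounded_kernel k}"
    and "(uniform_roe :: ('a,'a) kernel set) = bounded_ops"
proof -
  obtain e where e: "\<And>x y::'a. dist x y \<le> e" using bounded_dist[OF bnd] by blast
  have fpm: "finite_prop_M (s :: ('a \<times> nat, 'a) kernel)" for s
    unfolding finite_prop_M_def
  proof (intro exI[of _ "e + 2"] allI impI)
    fix x y :: 'a and n assume "e + 2 \<le> d0 (x, 0) (y, Suc n)"
    then show "s (y, n) x = 0" using e[of x y] unfolding d0_def by simp
  qed
  have fp: "finite_prop (s :: ('a,'a) kernel)" for s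
    unfolding finite_prop_def
  proof (intro exI[of _ "e + 1"] allI impI)
    fix x y :: 'a assume "e + 1 \<le> dist x y"
    then show "s x y = 0" using e[of x y] by simp
  qed
  show "(M_XN :: ('a \<times> nat, 'a) kernel set) = {k. bounded_kernel k}"
    unfolding M_XN_def using fpm by (auto intro!: exI)
  show "(uniform_roe :: ('a,'a) kernel set) = bounded_ops"
    unfolding uniform_roe_def bounded_ops_def using fp by (auto intro!: exI)
qed

theorem mainTheorem10:
  assumes discrete: "\<And>x::'a::{metric_space, countable}. open {x}"
  shows "(bounded (UNIV::'a set) \<longrightarrow>
            Tseq ` (M_XN :: ('a \<times> nat, 'a) kernel set) = ell2_dual (bounded_ops :: ('a,'a) kernel set) \<and>
            Tseq ` (M_XN :: ('a \<times> nat, 'a) kernel set) = ell2_dual (uniform_roe :: ('a,'a) kernel set))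
       \<and> (\<not> bounded (UNIV::'a set) \<longrightarrow>
            (\<exists>k \<in> (M_XN :: ('a \<times> nat, 'a) kernel set). Tseq k \<notin> ell2_bidual (uniform_roe :: ('a,'a) kernel set)))"
proof (intro conjI impI)
  assume bnd: "bounded (UNIV::'a set)"
  show "Tseq ` (M_XN :: ('a \<times> nat, 'a) kernel set) = ell2_dual (bounded_ops :: ('a,'a) kernel set)"
    unfolding part1(1)[OF bnd] by (rule Tseq_image)
  then show "Tseq ` (M_XN :: ('a \<times> nat, 'a) kernel set) = ell2_dual (uniform_roe :: ('a,'a) kernel set)"
    unfolding part1(2)[OF bnd] .
next
  assume "\<not> bounded (UNIV::'a set)"
  then show "\<exists>k \<in> (M_XN :: ('a \<times> nat, 'a) kernel set). Tseq k \<notin> ell2_bidual (uniform_roe :: ('a,'a) kernel set)"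
    by (rule part2)
qed

end
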